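(* Let $n\geq1$. If $\beta\in B_{2n}$ and the underlying permutation of $\beta$ consists of a single cycle (of length $2n$), then $\beta$ does not have positive Burau eigenvalues, i.e. it is not the case that all eigenvalues of $\rho(\beta)$ lie in $\mathbb{E}$ and are positive.
   Context: $B_N$ is the braid group generated by $\sigma_1,\dots,\sigma_{N-1}$, with underlying permutation homomorphism $B_N\to S_N$, $\sigma_i\mapsto(i\ i{+}1)$. The reduced Burau representation $\rho:B_N\to\mathrm{GL}_{N-1}(\mathbb{Z}[t^{\pm1}])$ is the homomorphism given for $N\ge3$ by $\rho(\sigma_1)=\begin{pmatrix}-t&0&0\\1&1&0\\0&0&I_{N-3}\end{pmatrix}$, $\rho(\sigma_{N-1})=\begin{pmatrix}I_{N-3}&0&0\\0&1&t\\0&0&-t\end{pmatrix}$, $\rho(\sigma_i)=\begin{pmatrix}I_{i-2}&0&0&0&0\\0&1&t&0&0\\0&0&-t&0&0\\0&0&1&1&0\\0&0&0&0&I_{N-i-2}\end{pmatrix}$ for $2\le i\le N-2$, and for $N=2$ by $\rho(\sigma_1)=(-t)$. $\mathbb{E}=\bigcup_{k\ge1}\mathbb{R}((t^{1/k}))$ is the field of Puiseux series over $\mathbb{R}$, with the ordering whose positive elements are the nonzero series whose lowest-exponent nonzero coefficient is positive. *)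

theory Defs
  imports "HOL-Computational_Algebra.Formal_Laurent_Series"
          "HOL-Combinatorics.Transposition" "HOL-Combinatorics.Orbits"
          "Jordan_Normal_Form.Char_Poly"
begin

text \<open>Braid words in B_N: a list of letters (i, s) with 1 \<le> i \<le> N-1, standing for
  sigma_i if s = True and sigma_i^(-1) if s = False.  Every braid is represented by a word,
  and both the Burau representation and the permutation map are homomorphisms, so they are
  computed on words.\<close>

definition braid_word :: "nat \<Rightarrow> (nat \<times> bool) list \<Rightarrow> bool" where
  "braid_word N w \<longleftrightarrow> (\<forall>(i, s) \<in> set w. 1 \<le> i \<and> i < N)"

definition braid_perm :: "(nat \<times> bool) list \<Rightarrow> nat \<Rightarrow> nat" where
  "braid_perm w = foldr (\<lambda>(i, s) f. transpose i (i + 1) \<circ> f) w id"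

text \<open>Reduced Burau matrix of sigma_i^(+-1) in B_N (size N-1), with the variable t
  specialised to an element T of a field.  With 1-indexed rows/columns, rho(sigma_i)
  agrees with the identity except in column i, whose entries are t in row i-1, -t in row i,
  and 1 in row i+1 (where these rows exist); this is exactly the matrix in the paper.\<close>

definition burau_gen :: "'a::field \<Rightarrow> nat \<Rightarrow> nat \<Rightarrow> bool \<Rightarrow> 'a mat" where
  "burau_gen T N i s = mat (N - 1) (N - 1) (\<lambda>(r, c).
     if c + 1 = i then
       (if r + 2 = i then (if s then T else 1)
        else if r + 1 = i then (if s then - T else - inverse T)
        else if r = i then (if s then 1 else inverse T)
        else 0)
     else (if r = c then 1 else 0))"

definition burau_word :: "'a::field \<Rightarrow> nat \<Rightarrow> (nat \<times> bool) list \<Rightarrow> 'a mat" where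
  "burau_word T N w = foldr (\<lambda>(i, s) M. burau_gen T N i s * M) w (1\<^sub>m (N - 1))"

definition fls_pos :: "real fls \<Rightarrow> bool" where
  "fls_pos f \<longleftrightarrow> f \<noteq> 0 \<and> fls_nth f (fls_subdegree f) > 0"

text \<open>Positive Burau eigenvalues: all eigenvalues of rho(beta) lie in the Puiseux field
  E = union of R((t^(1/k))) and are positive.  Since finitely many eigenvalues are involved
  and the union is directed, this means: for some k \<ge> 1 the characteristic polynomial of
  rho(beta), viewed over R((s)) with s = t^(1/k) (so t = s^k), splits into linear factors
  with positive roots.\<close>

definition positive_burau_eigenvalues :: "nat \<Rightarrow> (nat \<times> bool) list \<Rightarrow> bool" where
  "positive_burau_eigenvalues N w \<longleftrightarrow>
     (\<exists>k::nat. k \<ge> 1 \<and> (\<exists>as :: real fls list.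
        char_poly (burau_word (fls_X ^ k) N w) = (\<Prod>a\<leftarrow>as. [:- a, 1:]) \<and>
        (\<forall>a \<in> set as. fls_pos a)))"

end

theory Submission imports Defs "HOL-Combinatorics.Cycles" begin

lemma det_id_except_col:
  fixes A :: "'a::comm_ring_1 mat"
  assumes A: "A \<in> carrier_mat n n" and c: "c < n"
    and cols: "\<And>r j. r < n \<Longrightarrow> j < n \<Longrightarrow> j \<noteq> c \<Longrightarrow> A $$ (r,j) = (if r = j then 1 else 0)"
  shows "det A = A $$ (c,c)"
proof -
  have "det A = (\<Sum>j<n. A $$ (c,j) * cofactor A c j)" by (rule laplace_expansion_row[OF A c])
  also have "\<dots> = A $$ (c,c) * cofactor A c c"
  proof -
    have "(\<Sum>j<n. A $$ (c,j) * cofactor A c j) = A $$ (c,c) * cofactor A c c + (\<Sum>j\<in>{..<n}-{c}. A $$ (c,j) * cofactor A c j)"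
      by (rule sum.remove) (use c in auto)
    also have "(\<Sum>j\<in>{..<n}-{c}. A $$ (c,j) * cofactor A c j) = 0"
      by (rule sum.neutral) (use c cols in auto)
    finally show ?thesis by simp
  qed
  also have "mat_delete A c c = 1\<^sub>m (n-1)"
    by (rule eq_matI) (use A cols c in \<open>auto simp: mat_delete_def\<close>)
  hence "cofactor A c c = 1" unfolding cofactor_def by simp
  finally show ?thesis by simp
qed

lemma burau_gen_carrier: "burau_gen T N i s \<in> carrier_mat (N-1) (N-1)"
  by (simp add: burau_gen_def)

lemma det_burau_gen:
  assumes "1 \<le> i" "i < N"
  shows "det (burau_gen T N i s) = (if s then - T else - inverse T)"
proof -
  have "det (burau_gen T N i s) = burau_gen T N i s $$ (i-1, i-1)"
    by (rule det_id_except_col[OF burau_gen_carrier]) (use assms in \<open>auto simp: burau_gen_def\<close>)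
  also have "\<dots> = (if s then - T else - inverse T)" using assms by (auto simp: burau_gen_def)
  finally show ?thesis .
qed

lemma burau_word_Cons: "burau_word T N ((i,s)#w) = burau_gen T N i s * burau_word T N w"
  by (simp add: burau_word_def)

lemma burau_word_carrier: "burau_word T N w \<in> carrier_mat (N-1) (N-1)"
proof (induction w)
  case Nil then show ?case by (simp add: burau_word_def)
next
  case (Cons a w)
  obtain i s where a: "a = (i,s)" by fastforce
  show ?case unfolding a burau_word_Cons by (rule mult_carrier_mat[OF burau_gen_carrier Cons.IH])
qed

lemma det_burau_word:
  "braid_word N w \<Longrightarrow> det (burau_word T N w) = (\<Prod>(i,s)\<leftarrow>w. if s then - T else - inverse T)"
proof (induction w)
  case Nil then show ?case by (simp add: burau_word_def)
next
  case (Cons a w)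
  obtain i s where a: "a = (i,s)" by fastforce
  have bw: "braid_word N w" "1 \<le> i" "i < N" using Cons.prems a by (auto simp: braid_word_def)
  have "det (burau_word T N (a#w)) = det (burau_gen T N i s) * det (burau_word T N w)"
    unfolding a burau_word_Cons by (rule det_mult[OF burau_gen_carrier burau_word_carrier])
  also have "\<dots> = (if s then - T else - inverse T) * (\<Prod>(i,s)\<leftarrow>w. if s then - T else - inverse T)"
    by (simp only: Cons.IH[OF bw(1)] det_burau_gen[OF bw(2,3)])
  finally show ?case by (simp add: a)
qed

lemma braid_perm_Cons: "braid_perm ((i,s)#w) = transpose i (i+1) \<circ> braid_perm w"
  by (simp add: braid_perm_def)

lemma braid_perm_permutes: "braid_word N w \<Longrightarrow> braid_perm w permutes {1..N}"
proof (induction w)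
  case Nil
  have "braid_perm [] = id" by (rule ext) (simp add: braid_perm_def)
  then show ?case by (simp only:) (rule permutes_id)
next
  case (Cons a w)
  obtain i s where a: "a = (i,s)" by fastforce
  have bw: "braid_word N w" "1 \<le> i" "i < N" using Cons.prems a by (auto simp: braid_word_def)
  show ?case unfolding a braid_perm_Cons
    by (rule permutes_compose[OF Cons.IH[OF bw(1)] permutes_swap_id]) (use bw in auto)
qed

lemma braid_perm_permutation: "permutation (braid_perm w)"
proof (induction w)
  case Nil then show ?case by (simp add: braid_perm_def)
next
  case (Cons a w)
  obtain i s where a: "a = (i,s)" by fastforce
  show ?case unfolding a braid_perm_Cons by (rule permutation_compose[OF permutation_swap_id Cons.IH])
qed

lemma sign_braid_perm: "sign (braid_perm w) = (-1) ^ length w"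
proof (induction w)
  case Nil then show ?case by (simp add: braid_perm_def)
next
  case (Cons a w)
  obtain i s where a: "a = (i,s)" by fastforce
  have "sign (braid_perm (a#w)) = sign (transpose i (i+1)) * sign (braid_perm w)"
    unfolding a braid_perm_Cons by (rule sign_compose[OF permutation_swap_id braid_perm_permutation])
  then show ?case using Cons.IH by (simp add: sign_swap_id)
qed

lemma sign_cycle_of_list: "distinct cs \<Longrightarrow> sign (cycle_of_list cs) = (-1) ^ (length cs - 1)"
proof (induction cs rule: cycle_of_list.induct)
  case (1 i j cs)
  have "i \<noteq> j" using 1 by auto
  have "sign (cycle_of_list (i # j # cs)) = sign (transpose i j) * sign (cycle_of_list (j # cs))"
    unfolding cycle_of_list.simps(1) by (rule sign_compose[OF permutation_swap_id permutation_of_cycle])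
  moreover have "sign (cycle_of_list (j # cs)) = (-1)^length cs" using 1 by simp
  ultimately show ?case using \<open>i \<noteq> j\<close> by (simp del: cycle_of_list.simps add: sign_swap_id)
qed simp_all

lemma sign_cyclic:
  fixes p :: "nat \<Rightarrow> nat"
  assumes p: "p permutes {1..N}" and cyc: "cyclic_on p {1..N}" and N: "N \<ge> 1"
  shows "sign p = (-1) ^ (N - 1)"
proof -
  have perm: "permutation p" using p by (rule permutes_imp_permutation[rotated]) simp
  define cs where "cs = support p 1"
  have orb: "{1..N} = orbit p 1" using cyc N by (auto simp: cyclic_on_alldef)
  have setcs: "set cs = {1..N}"
    unfolding cs_def support_set[OF perm] orb orbit_altdef_permutation[OF perm] by auto
  have dist: "distinct cs" unfolding cs_def by (rule cycle_of_permutation[OF perm])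
  have "p = cycle_of_list cs"
  proof
    fix x show "p x = cycle_of_list cs x"
    proof (cases "x \<in> set cs")
      case True then show ?thesis unfolding cs_def by (rule cycle_restrict[OF perm])
    next
      case False
      then have "p x = x" using setcs p by (simp add: permutes_not_in)
      moreover have "cycle_of_list cs x = x" using False by (rule id_outside_supp)
      ultimately show ?thesis by simp
    qed
  qed
  moreover have "length cs = N" using distinct_card[OF dist] setcs by simp
  ultimately show ?thesis using sign_cycle_of_list[OF dist] by simp
qed


lemma fls_pos_mult:
  assumes "fls_pos a" "fls_pos b" shows "fls_pos (a * b)"
proof -
  have nz: "a \<noteq> 0" "b \<noteq> 0" using assms by (auto simp: fls_pos_def)
  have sd: "fls_subdegree (a*b) = fls_subdegree a + fls_subdegree b" using nz by simp
  have "fls_nth (a*b) (fls_subdegree a + fls_subdegree b) = fls_nth a (fls_subdegree a) * fls_nth b (fls_subdegree b)"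
    by (simp add: fls_times_nth(4))
  then show ?thesis using assms nz sd by (auto simp: fls_pos_def)
qed

lemma fls_pos_neg: "fls_pos a \<Longrightarrow> \<not> fls_pos (- a)"
  by (auto simp: fls_pos_def)

lemma fls_pos_one: "fls_pos 1"
  by (simp add: fls_pos_def)

lemma fls_pos_prod_list: "(\<forall>a\<in>set as. fls_pos a) \<Longrightarrow> fls_pos (prod_list as)"
  by (induction as) (auto simp: fls_pos_one fls_pos_mult)

lemma fls_pos_X_pow: "fls_pos (fls_X ^ k)"
  by (simp add: fls_pos_def)

lemma fls_pos_X_pow_inv: "fls_pos (inverse (fls_X ^ k))"
  by (simp add: fls_pos_def fls_inverse_X_power)

lemma prod_sign_split:
  fixes T :: "'a::field"
  shows "(\<Prod>(i,s)\<leftarrow>w. if s then - T else - inverse T) = (-1)^length w * (\<Prod>(i,s)\<leftarrow>w. if s then T else inverse T)"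
  by (induction w) auto

lemma char_poly_det:
  fixes A :: "'a::field mat"
  assumes A: "A \<in> carrier_mat m m" and cp: "char_poly A = (\<Prod>a\<leftarrow>as. [:- a, 1:])"
  shows "det A = prod_list as"
proof -
  have deg: "degree (\<Prod>a\<leftarrow>as. [:- a, 1:]) = length as \<and> (\<Prod>a\<leftarrow>as. [:- a, 1:]) \<noteq> 0"
  proof (induction as)
    case Nil then show ?case by simp
  next
    case (Cons a as)
    define P where "P = (\<Prod>a\<leftarrow>as. [:- a, 1:])"
    have e: "(\<Prod>a\<leftarrow>a#as. [:- a, 1:]) = [:- a, 1:] * P" by (simp add: P_def)
    have nz: "P \<noteq> 0" "[:- a, 1:] \<noteq> 0" using Cons by (auto simp: P_def)
    have dg: "degree ([:- a, 1:] * P) = degree [:- a, 1:] + degree P" by (rule degree_mult_eq[OF nz(2,1)])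
    have d1: "degree [:- a, 1:] = 1" by simp
    have dP: "degree P = length as" using Cons.IH P_def by simp
    have m: "[:- a, 1:] * P \<noteq> 0" using nz mult_eq_0_iff by blast
    have "degree ([:- a, 1:] * P) = length (a#as)" unfolding dg d1 dP by simp
    then show ?case unfolding e using m by blast
  qed
  have len: "length as = m" using degree_monic_char_poly[OF A] deg cp by simp
  have p0: "poly (\<Prod>a\<leftarrow>as. [:- a, 1:]) 0 = (-1)^length as * prod_list as"
    by (induction as) auto
  have "poly (char_poly A) 0 = det (- (char_matrix A 0))" by (rule char_poly_matrix[OF A])
  also have "- (char_matrix A 0) = (-1) \<cdot>\<^sub>m A"
    by (rule eq_matI) (use A in \<open>auto simp: char_matrix_def\<close>)
  also have "det ((-1) \<cdot>\<^sub>m A) = (-1)^m * det A" using A by simp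
  finally have "(-1)^m * det A = (-1)^m * prod_list as" using cp p0 len by simp
  then show ?thesis by simp
qed


theorem mainTheorem14:
  fixes n :: nat and w :: "(nat \<times> bool) list"
  assumes "n \<ge> 1"
    and "braid_word (2 * n) w"
    and "cyclic_on (braid_perm w) {1..2 * n}"
  shows "\<not> positive_burau_eigenvalues (2 * n) w"
proof
  assume "positive_burau_eigenvalues (2 * n) w"
  then obtain k and as :: "real fls list" where
    cp: "char_poly (burau_word (fls_X ^ k) (2*n) w) = (\<Prod>a\<leftarrow>as. [:- a, 1:])"
    and pos: "\<forall>a \<in> set as. fls_pos a"
    unfolding positive_burau_eigenvalues_def by blast
  define T :: "real fls" where "T = fls_X ^ k"
  have "sign (braid_perm w) = (-1) ^ (2*n - 1)"
    by (rule sign_cyclic[OF braid_perm_permutes[OF assms(2)] assms(3)]) (use assms(1) in simp)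
  then have "(-1::int) ^ length w = (-1) ^ (2*n - 1)" by (simp add: sign_braid_perm)
  moreover have "odd (2*n - 1)" using assms(1) by simp
  ultimately have oddw: "odd (length w)" by (metis neg_one_even_power neg_one_odd_power one_neq_neg_one)
  have "det (burau_word T (2*n) w) = prod_list as"
    by (rule char_poly_det[OF burau_word_carrier]) (use cp in \<open>simp add: T_def\<close>)
  then have p1: "fls_pos (det (burau_word T (2*n) w))" using fls_pos_prod_list[OF pos] by simp
  have "det (burau_word T (2*n) w) = (-1)^length w * (\<Prod>(i,s)\<leftarrow>w. if s then T else inverse T)"
    by (simp only: det_burau_word[OF assms(2)] prod_sign_split)
  also have "\<dots> = - (\<Prod>(i,s)\<leftarrow>w. if s then T else inverse T)" using oddw by simp
  finally have e: "det (burau_word T (2*n) w) = - (\<Prod>(i,s)\<leftarrow>w. if s then T else inverse T)" .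
  have "fls_pos (\<Prod>(i,s)\<leftarrow>w. if s then T else inverse T)"
    by (rule fls_pos_prod_list) (auto simp: T_def fls_pos_X_pow fls_pos_X_pow_inv)
  then show False using p1 e fls_pos_neg by metis
qed

end
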